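(* For all integers $n \geq k \geq 1$ and $m \geq 1$, let $\Sigma = \{0,1,\dots,m\}$ and let $\Sigma^{n \times k}$ be the $(m+1)^n \times (m+1)^k$ binary matrix with rows indexed by $x \in \Sigma^n$, columns indexed by $y \in \Sigma^k$, and entry $(x,y)$ equal to $1$ if $y$ is a subsequence of $x$ and $0$ otherwise. Then $\operatorname{rank}(\Sigma^{n \times k}) = (m+1)^k$.
   Context: A string $y$ of length $k$ is a subsequence of a string $x$ of length $n$ if there exist indices $i_1 < \dots < i_k$ with $x_{i_j} = y_j$ for all $j$. Rank is over the reals. *)

theory Defs
  imports "HOL-Library.Sublist" "Jordan_Normal_Form.DL_Rank"
begin

definition words :: "nat \<Rightarrow> nat \<Rightarrow> nat list list" where
  "words m l = List.n_lists l [0..<Suc m]"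

definition subseq_matrix :: "nat \<Rightarrow> nat \<Rightarrow> nat \<Rightarrow> real mat" where
  "subseq_matrix m n k =
     mat (length (words m n)) (length (words m k))
       (\<lambda>(i, j). if subseq (words m k ! j) (words m n ! i) then 1 else 0)"

end

theory Submission
  imports Defs
begin

definition dw :: "nat list \<Rightarrow> nat list" where
  "dw y = dropWhile (\<lambda>b. b = hd y) y"

lemma subseq_dropWhile:
  assumes "subseq q t" shows "subseq (dropWhile P q) (dropWhile P t)"
  using assms
proof (induction rule: list_emb.induct)
  case (list_emb_Nil ys)
  then show ?case by simp
next
  case (list_emb_Cons xs ys y)
  have "subseq (dropWhile P ys) ys" by (metis list_emb_append2 takeWhile_dropWhile_id subseq_order.order_refl)
  then have "subseq (dropWhile P xs) ys" using list_emb_Cons.IH by (meson subseq_order.order_trans)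
  then show ?case using list_emb_Cons.IH by (cases "P y") auto
next
  case (list_emb_Cons2 x y xs ys)
  then show ?case by auto
qed

lemma replicate_dw:
  "w = replicate (length w - length (dropWhile (\<lambda>b. b = a) w)) a @ dropWhile (\<lambda>b. b = a) w"
proof (induction w)
  case Nil
  then show ?case by simp
next
  case (Cons x w)
  have le: "length (dropWhile (\<lambda>b. b = a) w) \<le> length w"
    by (metis length_dropWhile_le)
  show ?case
  proof (cases "x = a")
    case True
    then have "length (x # w) - length (dropWhile (\<lambda>b. b = a) (x # w))
       = Suc (length w - length (dropWhile (\<lambda>b. b = a) w))" using le by simp
    then show ?thesis using Cons True by simp
  next
    case False
    then show ?thesis by simp
  qed
qed

lemma key:
  assumes "y \<noteq> []" "length y' = length y" "subseq y' (replicate N (hd y) @ tl y)"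
  shows "y' = y \<or> length (dw y') < length (dw y)"
proof -
  define a where "a = hd y"
  have h: "subseq y' (replicate N a @ tl y)" using assms(3) by (simp add: a_def)
  obtain p q where pq: "y' = p @ q" "subseq p (replicate N a)" "subseq q (tl y)"
    using subseq_appendE[OF h] by blast
  have pa: "\<forall>x\<in>set p. x = a"
  proof
    fix x assume x: "x \<in> set p"
    obtain z where "z \<in> set (replicate N a)" "x = z" by (rule list_emb_set[OF pq(2) x])
    then show "x = a" by simp
  qed
  have "length q \<le> length (tl y)" using pq(3) by (rule list_emb_length)
  moreover have "length (tl y) < length y" using assms(1) by simp
  ultimately have "p \<noteq> []" using assms(2) pq(1) by auto
  then have hy': "hd y' = a" using pa pq(1) by (cases p) auto
  have y: "y = a # tl y" using assms(1) a_def by simp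
  have "dw y' = dropWhile (\<lambda>b. b = a) y'" by (simp add: dw_def hy')
  also have "\<dots> = dropWhile (\<lambda>b. b = a) q" using pa pq(1) by (simp add: dropWhile_append2)
  finally have d1: "dw y' = dropWhile (\<lambda>b. b = a) q" .
  have d2: "dw y = dropWhile (\<lambda>b. b = a) (tl y)"
    unfolding dw_def a_def[symmetric] by (subst y) simp
  have sub: "subseq (dw y') (dw y)" unfolding d1 d2 by (rule subseq_dropWhile[OF pq(3)])
  have r1: "y' = replicate (length y' - length (dw y')) a @ dw y'"
    using replicate_dw[of y' a] hy' unfolding dw_def by simp
  have r2: "y = replicate (length y - length (dw y)) a @ dw y"
    using replicate_dw[of y a] unfolding dw_def a_def by simp
  show ?thesis
  proof (cases "length (dw y') = length (dw y)")
    case True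
    then have "dw y' = dw y" using sub subseq_same_length by blast
    then have "y' = y" using r1 r2 assms(2) by (metis)
    then show ?thesis by simp
  next
    case False
    then show ?thesis using list_emb_length[OF sub] by simp
  qed
qed

lemma words_facts:
  "length (words m l) = (m+1)^l"
  "set (words m l) = {ys. length ys = l \<and> set ys \<subseteq> {0..<Suc m}}"
  "distinct (words m l)"
    apply (simp add: words_def length_n_lists)
   apply (simp only: words_def set_n_lists set_upt)
  apply (simp add: words_def distinct_n_lists)
  done

theorem mainTheorem3:
  fixes n k m :: nat
  assumes "1 \<le> k" and "k \<le> n" and "1 \<le> m"
  shows "vec_space.rank ((m + 1) ^ n) (subseq_matrix m n k) = (m + 1) ^ k"
proof -
  define W where "W = words m n"
  define V where "V = words m k"
  define nr where "nr = (m+1)^n"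
  define nc where "nc = (m+1)^k"
  define A where "A = subseq_matrix m n k"
  define X where "X y = replicate (n-k+1) (hd y) @ tl (y::nat list)" for y
  have lW: "length W = nr" unfolding W_def nr_def by (simp add: words_facts)
  have lV: "length V = nc" unfolding V_def nc_def by (simp add: words_facts)
  have A: "A \<in> carrier_mat nr nc"
    unfolding A_def subseq_matrix_def using lW lV W_def V_def by simp
  have Aij: "A $$ (i,j) = (if subseq (V!j) (W!i) then 1 else 0)" if "i < nr" "j < nc" for i j
    unfolding A_def subseq_matrix_def using that lW lV W_def V_def by simp
  have Vj: "length (V!j) = k" "set (V!j) \<subseteq> {0..<Suc m}" if "j < nc" for j
    using nth_mem[of j V] that lV unfolding V_def by (auto simp: words_facts)
  have Vne: "V!j \<noteq> []" if "j < nc" for j using Vj(1)[OF that] assms(1) by auto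
  have Xrow: "\<exists>i<nr. W!i = X (V!j)" if j: "j < nc" for j
  proof -
    have "length (X (V!j)) = n" using Vj(1)[OF j] assms(1,2) unfolding X_def by simp
    moreover have "set (X (V!j)) \<subseteq> {0..<Suc m}"
    proof -
      have "set (X (V!j)) \<subseteq> set (V!j)" using Vne[OF j] unfolding X_def
        by (cases "V!j") auto
      then show ?thesis using Vj(2)[OF j] by blast
    qed
    ultimately have "X (V!j) \<in> set W" unfolding W_def by (simp add: words_facts)
    then show ?thesis using lW by (metis in_set_conv_nth)
  qed
  have selfsub: "subseq (V!j) (X (V!j))" if j: "j < nc" for j
  proof -
    obtain a t where at: "V!j = a # t" using Vne[OF j] by (cases "V!j") auto
    have "X (V!j) = a # (replicate (n-k) a @ t)" unfolding X_def at by simp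
    then show ?thesis unfolding at by (simp add: subseq_drop_many)
  qed
  have tri: "j' = j \<or> length (dw (V!j')) < length (dw (V!j))"
    if j: "j < nc" and j': "j' < nc" and s: "subseq (V!j') (X (V!j))" for j j'
  proof -
    have "V!j' = V!j \<or> length (dw (V!j')) < length (dw (V!j))"
      using key[OF Vne[OF j] _ s[unfolded X_def]] Vj(1)[OF j] Vj(1)[OF j'] by simp
    moreover have "distinct V" unfolding V_def by (simp add: words_facts)
    ultimately show ?thesis using j j' lV by (metis nth_eq_iff_index_eq)
  qed
  have kernel: "v $ j = 0"
    if v: "v \<in> carrier_vec nc" and Av: "A *\<^sub>v v = 0\<^sub>v nr" and j: "j < nc" for v j
    using j
  proof (induction "length (dw (V!j))" arbitrary: j rule: less_induct)
    case less
    obtain i where i: "i < nr" "W!i = X (V!j)" using Xrow[OF less.prems] by blast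
    have "0 = (A *\<^sub>v v) $ i" using Av i by simp
    also have "\<dots> = (\<Sum>j'\<in>{0..<nc}. A $$ (i,j') * v $ j')"
      using A i v by (simp add: scalar_prod_def)
    also have "\<dots> = (\<Sum>j'\<in>{0..<nc}. (if j' = j then v $ j else 0))"
    proof (rule sum.cong)
      fix j' assume j': "j' \<in> {0..<nc}"
      show "A $$ (i,j') * v $ j' = (if j' = j then v $ j else 0)"
      proof (cases "subseq (V!j') (X (V!j))")
        case True
        then have "j' = j \<or> length (dw (V!j')) < length (dw (V!j))"
          using tri less.prems j' by simp
        then show ?thesis using less.hyps[of j'] j' Aij[OF i(1), of j'] i True by auto
      next
        case False
        then show ?thesis using selfsub[OF less.prems] Aij[OF i(1), of j'] j' i by auto
      qed
    qed simp
    also have "\<dots> = v $ j" using less.prems by simp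
    finally show ?case by simp
  qed
  have dist: "distinct (cols A)"
  proof -
    have "inj_on (col A) {0..<nc}"
    proof
      fix i j assume i: "i \<in> {0..<nc}" and j: "j \<in> {0..<nc}" and c: "col A i = col A j"
      have ij: "subseq (V!j) (X (V!i))" if i: "i < nc" and j: "j < nc" and c: "col A i = col A j" for i j
      proof -
        obtain r where r: "r < nr" "W!r = X (V!i)" using Xrow[OF i] by blast
        have "col A i $ r = 1" using A r i Aij[OF r(1) i] selfsub[OF i] by simp
        then have "col A j $ r = 1" using c by simp
        then have "A $$ (r, j) = 1" using A r j by simp
        then show ?thesis using Aij[OF r(1) j] r by (auto split: if_splits)
      qed
      have i': "i < nc" and j': "j < nc" using i j by auto
      have "j = i \<or> length (dw (V!j)) < length (dw (V!i))" by (rule tri[OF i' j' ij[OF i' j' c]])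
      moreover have "i = j \<or> length (dw (V!i)) < length (dw (V!j))" by (rule tri[OF j' i' ij[OF j' i' c[symmetric]]])
      ultimately show "i = j" by linarith
    qed
    then show ?thesis unfolding cols_def using A by (simp add: distinct_map)
  qed
  interpret VS: vec_space "TYPE(real)" nr .
  have li: "VS.lin_indpt (set (cols A))"
  proof
    assume "VS.lin_dep (set (cols A))"
    then obtain v where v: "v \<in> carrier_vec nc" "v \<noteq> 0\<^sub>v nc" "A *\<^sub>v v = 0\<^sub>v nr"
      using VS.lin_depE[OF A _ dist] by blast
    have "v = 0\<^sub>v nc" using kernel[OF v(1) v(3)] v(1) by (intro eq_vecI) auto
    then show False using v(2) by simp
  qed
  have "VS.rank A = nc" by (rule VS.lin_indpt_full_rank[OF A dist li])
  then show ?thesis unfolding nr_def nc_def A_def by simp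
qed

end
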